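(* Consider the problem of minimizing $g(\mathbf{x})+f(\mathbf{x})+h(\mathbf{y})$ subject to $\mathbf{A}\mathbf{x}+\mathbf{B}\mathbf{y}=\mathbf{0}$ (the coupling function $g$ depends only on $\mathbf{x}$), under the standing assumptions (i)–(iv) below, and let $\{(\mathbf{x}^k,\mathbf{y}^k,\boldsymbol{\gamma}^k)\}$ be generated by the two-block linearized ADMM below with parameters satisfying $$L_x\ge L_g+\beta L_{\mathbf{A}}+6L_w^2+1,\quad L_y\ge L_w+L_w^2+3,\quad C_m=\tfrac{L_y+L_w^2}{2},\quad \beta\ge\max\left\{\frac{L_w+L_y+2}{\lambda_{\mathbf{B}^{\rm T}\mathbf{B}}},\frac{3(L_w^2+L_y^2)}{\lambda_{\mathbf{B}^{\rm T}\mathbf{B}}C_m},\frac{3L_y^2}{\lambda_{\mathbf{B}^{\rm T}\mathbf{B}}}\right\},$$ where $L_{\mathbf{A}}$ is the largest eigenvalue of $\mathbf{A}^{\rm T}\mathbf{A}$, $\lambda_{\mathbf{B}^{\rm T}\mathbf{B}}$ the smallest eigenvalue of $\mathbf{B}^{\rm T}\mathbf{B}$, $L_w=L_g+L_h$. Then the sequence $\{g(\mathbf{x}^k)+f(\mathbf{x}^k)+h(\mathbf{y}^k)\}$ is convergent.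
   Context: Variables $\mathbf{x}\in\mathbb{R}^p$, $\mathbf{y}\in\mathbb{R}^q$; $\mathbf{A}\in\mathbb{R}^{n\times p}$, $\mathbf{B}\in\mathbb{R}^{n\times q}$; $f$ possibly nonconvex nonsmooth. A function is $L$-Lipschitz differentiable if its gradient is $L$-Lipschitz. Standing assumptions: (i) $h$ is $L_h$-Lipschitz differentiable; (ii) $g$ is $L_g$-Lipschitz differentiable; (iii) $g(\mathbf{x})+f(\mathbf{x})+h(\mathbf{y})$ is lower bounded on the feasible set $\{(\mathbf{x},\mathbf{y}):\mathbf{A}\mathbf{x}+\mathbf{B}\mathbf{y}=\mathbf{0}\}$ and coercive with respect to $\mathbf{y}$ over it (objective $\to+\infty$ along any feasible sequence with $\|\mathbf{y}^k\|\to\infty$); (iv) $\mathbf{B}$ has full column rank and $\mathrm{Im}(\mathbf{A})\subset\mathrm{Im}(\mathbf{B})$. Algorithm (parameters $L_x,L_y,\beta>0$, arbitrary initialization): $\mathbf{x}^{k+1}\in\arg\min\bar f^k$, $\mathbf{y}^{k+1}=\arg\min\bar h^k$, $\boldsymbol{\gamma}^{k+1}=\boldsymbol{\gamma}^k+\beta(\mathbf{A}\mathbf{x}^{k+1}+\mathbf{B}\mathbf{y}^{k+1})$, with $\bar f^k(\mathbf{x})=f(\mathbf{x})+\langle\boldsymbol{\gamma}^k,\mathbf{A}\mathbf{x}\rangle+\frac{L_x}{2}\|\mathbf{x}-\mathbf{x}^k\|^2+\langle\mathbf{x}-\mathbf{x}^k,\nabla g(\mathbf{x}^k)+\beta\mathbf{A}^{\rm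 T}(\mathbf{A}\mathbf{x}^k+\mathbf{B}\mathbf{y}^k)\rangle$, $\bar h^k(\mathbf{y})=\langle\boldsymbol{\gamma}^k,\mathbf{B}\mathbf{y}\rangle+\frac{L_y}{2}\|\mathbf{y}-\mathbf{y}^k\|^2+\frac{\beta}{2}\|\mathbf{A}\mathbf{x}^{k+1}+\mathbf{B}\mathbf{y}\|^2+\langle\mathbf{y}-\mathbf{y}^k,\nabla h(\mathbf{y}^k)\rangle$ (minimizers of $\bar f^k$ assumed to exist). *)

theory Defs
  imports "HOL-Analysis.Analysis"
begin

definition mat_eigenvalues :: "real^'n^'n \<Rightarrow> real set" where
  "mat_eigenvalues M = {c. \<exists>v. v \<noteq> 0 \<and> M *v v = c *\<^sub>R v}"

text \<open>Largest / smallest eigenvalue (used for symmetric matrices, where the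
  eigenvalue set is finite and nonempty).\<close>
definition max_eigenvalue :: "real^'n^'n \<Rightarrow> real" where
  "max_eigenvalue M = Max (mat_eigenvalues M)"

definition min_eigenvalue :: "real^'n^'n \<Rightarrow> real" where
  "min_eigenvalue M = Min (mat_eigenvalues M)"

end

theory Submission
  imports Defs
begin

declare transpose_matrix_vector[simp del] vector_transpose_matrix[simp del]

lemma norm_add_sq: "(norm (a + b :: 'a::real_inner))\<^sup>2 = (norm a)\<^sup>2 + 2 * (a \<bullet> b) + (norm b)\<^sup>2"
  by (simp add: power2_norm_eq_inner inner_add_left inner_add_right inner_commute)

lemma norm_diff_sq: "(norm (a - b :: 'a::real_inner))\<^sup>2 = (norm a)\<^sup>2 - 2 * (a \<bullet> b) + (norm b)\<^sup>2"
  by (simp add: power2_norm_eq_inner inner_diff_left inner_diff_right inner_commute)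

lemma mv_dot_transpose: "((A::real^'a^'b) *v u) \<bullet> w = u \<bullet> (transpose A *v w)"
  by (metis dot_lmul_matrix inner_commute transpose_matrix_vector)

lemma quad_zero:
  fixes a b :: real
  assumes "\<And>t. 0 \<le> t * a + t\<^sup>2 * b"
  shows "a = 0"
proof (rule ccontr)
  assume na: "a \<noteq> 0"
  define c where "c = \<bar>b\<bar> + 1"
  have c: "c > 0" "b \<le> c - 1" unfolding c_def by auto
  have "0 \<le> (-a/c) * a + (-a/c)\<^sup>2 * b" using assms .
  also have "\<dots> \<le> (-a/c) * a + (-a/c)\<^sup>2 * (c - 1)"
    using c by (intro add_left_mono mult_left_mono) auto
  also have "\<dots> = - a\<^sup>2 / c\<^sup>2"
    using c by (simp add: field_simps power2_eq_square)
  also have "\<dots> < 0" using na c by simp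
  finally show False by simp
qed

lemma sym_rayleigh:
  fixes M :: "real^'n^'n"
  assumes symM: "transpose M = M"
  shows "finite (mat_eigenvalues M) \<and> min_eigenvalue M \<in> mat_eigenvalues M \<and>
         (\<forall>u. min_eigenvalue M * (norm u)\<^sup>2 \<le> u \<bullet> (M *v u))"
proof -
  have sym: "(M *v u) \<bullet> w = u \<bullet> (M *v w)" for u w
    using mv_dot_transpose[of M u w] symM by simp
  have ne: "sphere (0::real^'n) 1 \<noteq> {}"
    by (simp add: sphere_eq_empty)
  have cont: "continuous_on (sphere 0 1) (\<lambda>u::real^'n. u \<bullet> (M *v u))"
    by (intro continuous_intros linear_continuous_on) (auto simp: matrix_vector_mul_linear)
  obtain v where v: "v \<in> sphere 0 1" and vmin: "\<And>u. u \<in> sphere 0 1 \<Longrightarrow> v \<bullet> (M *v v) \<le> u \<bullet> (M *v u)"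
    using continuous_attains_inf[OF compact_sphere ne cont] by blast
  define m where "m = v \<bullet> (M *v v)"
  have nv: "norm v = 1" using v by simp
  have ray: "m * (norm u)\<^sup>2 \<le> u \<bullet> (M *v u)" for u
  proof (cases "u = 0")
    case True then show ?thesis by simp
  next
    case False
    define n where "n = norm u"
    have n: "n > 0" using False n_def by simp
    have "(u /\<^sub>R n) \<in> sphere 0 1" using n n_def by simp
    then have "m \<le> (u /\<^sub>R n) \<bullet> (M *v (u /\<^sub>R n))" using vmin m_def by blast
    also have "\<dots> = (u \<bullet> (M *v u)) / n\<^sup>2"
      by (simp add: matrix_vector_mult_scaleR power2_eq_square divide_inverse)
    finally show ?thesis using n n_def by (simp add: field_simps)
  qed
  have eig: "M *v v = m *\<^sub>R v"
  proof -
    define w where "w = M *v v - m *\<^sub>R v"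
    have "\<And>t. 0 \<le> t * (2 * (w \<bullet> w)) + t\<^sup>2 * (w \<bullet> (M *v w) - m * (norm w)\<^sup>2)"
    proof -
      fix t :: real
      have e1: "(v + t *\<^sub>R w) \<bullet> (M *v (v + t *\<^sub>R w)) = m + 2 * t * (w \<bullet> (M *v v)) + t\<^sup>2 * (w \<bullet> (M *v w))"
      proof -
        have s1: "v \<bullet> (M *v w) = w \<bullet> (M *v v)" using sym[of v w] by (simp add: inner_commute)
        have "(v + t *\<^sub>R w) \<bullet> (M *v (v + t *\<^sub>R w)) = v \<bullet> (M *v v) + t * (v \<bullet> (M *v w)) + t * (w \<bullet> (M *v v)) + t * t * (w \<bullet> (M *v w))"
          by (simp add: matrix_vector_right_distrib matrix_vector_mult_scaleR inner_add_left inner_add_right distrib_left)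
        then show ?thesis unfolding s1 m_def[symmetric] by (simp add: power2_eq_square)
      qed
      have e2: "(norm (v + t *\<^sub>R w))\<^sup>2 = 1 + 2 * t * (v \<bullet> w) + t\<^sup>2 * (norm w)\<^sup>2"
        using nv by (simp add: norm_add_sq power_mult_distrib algebra_simps)
      have e3: "w \<bullet> (M *v v) - m * (v \<bullet> w) = w \<bullet> w"
      proof -
        have "w \<bullet> (M *v v) - m * (v \<bullet> w) = w \<bullet> (M *v v - m *\<^sub>R v)"
          by (simp add: inner_diff_right inner_commute)
        also have "M *v v - m *\<^sub>R v = w" by (simp add: w_def)
        finally show ?thesis .
      qed
      have "0 \<le> (v + t *\<^sub>R w) \<bullet> (M *v (v + t *\<^sub>R w)) - m * (norm (v + t *\<^sub>R w))\<^sup>2"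
        using ray[of "v + t *\<^sub>R w"] by simp
      also have "\<dots> = t * (2 * (w \<bullet> w)) + t\<^sup>2 * (w \<bullet> (M *v w) - m * (norm w)\<^sup>2)"
      proof -
        have e4: "w \<bullet> (M *v v) = w \<bullet> w + m * (v \<bullet> w)" using e3 by simp
        show ?thesis unfolding e1 e2 e4 by (simp add: algebra_simps power2_eq_square)
      qed
      finally show "0 \<le> t * (2 * (w \<bullet> w)) + t\<^sup>2 * (w \<bullet> (M *v w) - m * (norm w)\<^sup>2)" .
    qed
    from quad_zero[OF this] have "w = 0" by simp
    then show ?thesis unfolding w_def by simp
  qed
  have mE: "m \<in> mat_eigenvalues M"
  proof -
    have "v \<noteq> 0" using nv by auto
    then show ?thesis unfolding mat_eigenvalues_def using eig by blast
  qed
  have ge: "m \<le> c" if cE: "c \<in> mat_eigenvalues M" for c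
  proof -
    from cE obtain u where u: "u \<noteq> 0" "M *v u = c *\<^sub>R u" unfolding mat_eigenvalues_def by auto
    have "u \<bullet> (M *v u) = c * (norm u)\<^sup>2" using u(2) by (simp add: power2_norm_eq_inner)
    then have "m * (norm u)\<^sup>2 \<le> c * (norm u)\<^sup>2" using ray[of u] by linarith
    moreover have "(norm u)\<^sup>2 > 0" using u(1) by simp
    ultimately show ?thesis by (meson mult_le_cancel_right_pos)
  qed
  have fin: "finite (mat_eigenvalues M)"
  proof -
    define E where "E = mat_eigenvalues M"
    define ev where "ev c = (SOME u. u \<noteq> 0 \<and> M *v u = c *\<^sub>R u)" for c
    have evp: "ev c \<noteq> 0 \<and> M *v ev c = c *\<^sub>R ev c" if "c \<in> E" for c
      using that unfolding E_def mat_eigenvalues_def ev_def by (metis (mono_tags, lifting) someI_ex mem_Collect_eq)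
    have orth: "ev c \<bullet> ev d = 0" if "c \<in> E" "d \<in> E" "c \<noteq> d" for c d
    proof -
      have "c * (ev c \<bullet> ev d) = (M *v ev c) \<bullet> ev d" using evp[OF that(1)] by simp
      also have "\<dots> = ev c \<bullet> (M *v ev d)" by (rule sym)
      also have "\<dots> = d * (ev c \<bullet> ev d)" using evp[OF that(2)] by simp
      finally show ?thesis using that(3) by simp
    qed
    have inj: "inj_on ev E"
    proof (rule inj_onI)
      fix c d assume cd: "c \<in> E" "d \<in> E" "ev c = ev d"
      show "c = d"
      proof (rule ccontr)
        assume "c \<noteq> d"
        then have "ev c \<bullet> ev c = 0" using orth[OF cd(1,2)] cd(3) by simp
        then show False using evp[OF cd(1)] by simp
      qed
    qed
    have po: "pairwise orthogonal (ev ` E)"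
      unfolding pairwise_def orthogonal_def using orth by (metis imageE)
    have "0 \<notin> ev ` E" using evp by auto
    then have "independent (ev ` E)" using pairwise_orthogonal_independent[OF po] by simp
    then have "finite (ev ` E)" by (rule finiteI_independent)
    then show ?thesis using finite_image_iff[OF inj] E_def by simp
  qed
  have "min_eigenvalue M = m"
    unfolding min_eigenvalue_def using fin mE ge by (intro Min_eqI) auto
  then show ?thesis using fin mE ray by simp
qed
lemma quad_form_AtA: "u \<bullet> ((transpose B ** B) *v u) = (norm ((B::real^'a^'b) *v u))\<^sup>2"
proof -
  have e: "(transpose B ** B) *v u = transpose B *v (B *v u)" by (simp only: matrix_vector_mul_assoc)
  show ?thesis unfolding e power2_norm_eq_inner by (metis mv_dot_transpose)
qed

lemma sym_AtA: "transpose (transpose B ** B) = transpose (B::real^'a^'b) ** B"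
  by (simp add: matrix_transpose_mul)

lemma B_facts:
  fixes B :: "real^'q^'n"
  assumes rk: "rank B = CARD('q)"
  shows "min_eigenvalue (transpose B ** B) > 0 \<and>
    (\<forall>u. min_eigenvalue (transpose B ** B) * (norm u)\<^sup>2 \<le> (norm (B *v u))\<^sup>2) \<and>
    (\<forall>u. min_eigenvalue (transpose B ** B) * (norm (B *v u))\<^sup>2 \<le> (norm (transpose B *v (B *v u)))\<^sup>2)"
proof -
  define M where "M = transpose B ** B"
  define lam where "lam = min_eigenvalue M"
  have R: "finite (mat_eigenvalues M) \<and> lam \<in> mat_eigenvalues M \<and> (\<forall>u. lam * (norm u)\<^sup>2 \<le> u \<bullet> (M *v u))"
    unfolding lam_def M_def by (rule sym_rayleigh[OF sym_AtA])
  have qf: "u \<bullet> (M *v u) = (norm (B *v u))\<^sup>2" for u unfolding M_def by (rule quad_form_AtA)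
  have ray: "lam * (norm u)\<^sup>2 \<le> (norm (B *v u))\<^sup>2" for u using R qf by metis
  have inj: "inj ((*v) B)" using rk full_rank_injective by blast
  from R obtain v where v: "v \<noteq> 0" "M *v v = lam *\<^sub>R v" unfolding mat_eigenvalues_def by auto
  have "B *v v \<noteq> 0" using inj v(1) by (metis injD matrix_vector_mult_0_right)
  then have "(norm (B *v v))\<^sup>2 > 0" by simp
  moreover have "(norm (B *v v))\<^sup>2 = lam * (norm v)\<^sup>2" using qf[of v] v(2) by (simp add: power2_norm_eq_inner)
  ultimately have lpos: "lam > 0" using v(1) by (simp add: zero_less_mult_iff)
  have third: "lam * (norm (B *v u))\<^sup>2 \<le> (norm (transpose B *v (B *v u)))\<^sup>2" for u
  proof -
    define z where "z = M *v u"
    have z: "z = transpose B *v (B *v u)" unfolding z_def M_def by (simp add: matrix_vector_mul_assoc)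
    have "(norm z)\<^sup>2 - lam * (u \<bullet> z) = lam * (u \<bullet> z - lam * (norm u)\<^sup>2) + (norm (z - lam *\<^sub>R u))\<^sup>2"
    proof -
      have nd: "(norm (z - lam *\<^sub>R u))\<^sup>2 = (norm z)\<^sup>2 - 2*lam*(u \<bullet> z) + lam\<^sup>2*(norm u)\<^sup>2"
        by (simp add: norm_diff_sq inner_commute power_mult_distrib)
      show ?thesis unfolding nd by (simp add: algebra_simps power2_eq_square)
    qed
    moreover have "u \<bullet> z - lam * (norm u)\<^sup>2 \<ge> 0" using R unfolding z_def by auto
    ultimately have "(norm z)\<^sup>2 \<ge> lam * (u \<bullet> z)" using lpos
      by (metis add_nonneg_nonneg diff_ge_0_iff_ge mult_nonneg_nonneg less_le zero_le_power2)
    then show ?thesis using qf[of u] z z_def by simp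
  qed
  show ?thesis using lpos ray third unfolding lam_def M_def by blast
qed

lemma A_facts:
  fixes A :: "real^'p^'n"
  shows "(norm (A *v u))\<^sup>2 \<le> max_eigenvalue (transpose A ** A) * (norm u)\<^sup>2"
proof -
  define M where "M = transpose A ** A"
  define N where "N = - M"
  have Nv: "N *v v = - (M *v v)" for v
    using matrix_vector_mult_diff_rdistrib[of 0 M v] unfolding N_def by simp
  have symM: "transpose M = M" by (simp add: M_def sym_AtA)
  have symN: "transpose N = N"
  proof -
    have "transpose N $ i $ j = N $ i $ j" for i j
    proof -
      have "M $ j $ i = M $ i $ j" using arg_cong[OF symM, of "\<lambda>X. X$i$j"] by (simp add: transpose_def)
      then show ?thesis by (simp add: N_def transpose_def)
    qed
    then show ?thesis by (simp add: vec_eq_iff)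
  qed
  have R: "finite (mat_eigenvalues N) \<and> min_eigenvalue N \<in> mat_eigenvalues N \<and> (\<forall>u. min_eigenvalue N * (norm u)\<^sup>2 \<le> u \<bullet> (N *v u))"
    by (rule sym_rayleigh[OF symN])
  have E: "mat_eigenvalues M = uminus ` mat_eigenvalues N"
  proof -
    have "c \<in> mat_eigenvalues M \<longleftrightarrow> -c \<in> mat_eigenvalues N" for c
      unfolding mat_eigenvalues_def Nv by (auto simp: scaleR_left.minus)
    then show ?thesis by (force simp: image_iff)
  qed
  have "max_eigenvalue M = - min_eigenvalue N"
    unfolding max_eigenvalue_def E
  proof (rule Max_eqI)
    show "finite (uminus ` mat_eigenvalues N)" using R by simp
    show "- min_eigenvalue N \<in> uminus ` mat_eigenvalues N" using R by simp
    fix y assume "y \<in> uminus ` mat_eigenvalues N"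
    then obtain c where "c \<in> mat_eigenvalues N" "y = - c" by auto
    then show "y \<le> - min_eigenvalue N" using R by (simp add: min_eigenvalue_def)
  qed
  moreover have "min_eigenvalue N * (norm u)\<^sup>2 \<le> - (norm (A *v u))\<^sup>2"
    using R[THEN conjunct2, THEN conjunct2, rule_format, of u] quad_form_AtA[of u A]
    unfolding Nv M_def by simp
  ultimately show ?thesis unfolding M_def by simp
qed
lemma descent:
  fixes h :: "'a::real_inner \<Rightarrow> real"
  assumes hd: "\<And>v. (h has_derivative (\<lambda>d. G v \<bullet> d)) (at v)"
    and lip: "L-lipschitz_on UNIV G"
  shows "h y \<le> h x + G x \<bullet> (y - x) + L/2 * (norm (y - x))\<^sup>2"
proof -
  define d where "d = y - x"
  define \<phi> where "\<phi> t = h (x + t *\<^sub>R d) - t * (G x \<bullet> d) - L/2 * t\<^sup>2 * (norm d)\<^sup>2" for t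
  have L0: "L \<ge> 0" using lip lipschitz_on_nonneg by blast
  have hder: "((\<lambda>t. h (x + t *\<^sub>R d)) has_real_derivative (G (x + t *\<^sub>R d) \<bullet> d)) (at t)" for t
  proof -
    have l: "((\<lambda>t. x + t *\<^sub>R d) has_derivative (\<lambda>s. s *\<^sub>R d)) (at t)"
      by (auto intro!: derivative_eq_intros)
    have "((\<lambda>t. h (x + t *\<^sub>R d)) has_derivative (\<lambda>s. G (x + t *\<^sub>R d) \<bullet> (s *\<^sub>R d))) (at t)"
      using has_derivative_compose[OF l hd] .
    moreover have "(\<lambda>s. G (x + t *\<^sub>R d) \<bullet> (s *\<^sub>R d)) = (*) (G (x + t *\<^sub>R d) \<bullet> d)"
      by (auto simp: fun_eq_iff)
    ultimately show ?thesis unfolding has_field_derivative_def by simp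
  qed
  have pder: "(\<phi> has_real_derivative (G (x + t *\<^sub>R d) \<bullet> d - G x \<bullet> d - L/2 * (2 * t) * (norm d)\<^sup>2)) (at t)" for t
    unfolding \<phi>_def
    by (rule DERIV_diff[OF DERIV_diff[OF hder]]) (auto intro!: derivative_eq_intros)
  have "\<phi> 1 \<le> \<phi> 0"
  proof (rule DERIV_nonpos_imp_nonincreasing[of 0 1])
    fix t :: real assume t: "0 \<le> t" "t \<le> 1"
    have "(G (x + t *\<^sub>R d) - G x) \<bullet> d \<le> norm (G (x + t *\<^sub>R d) - G x) * norm d"
      by (rule norm_cauchy_schwarz)
    also have "\<dots> \<le> (L * norm (t *\<^sub>R d)) * norm d"
      using lipschitz_onD[OF lip, of "x + t *\<^sub>R d" x] by (intro mult_right_mono) (auto simp: dist_norm)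
    also have "\<dots> = L * t * (norm d)\<^sup>2" using t by (simp add: power2_eq_square)
    finally have "G (x + t *\<^sub>R d) \<bullet> d - G x \<bullet> d - L/2 * (2 * t) * (norm d)\<^sup>2 \<le> 0"
      by (simp add: inner_diff_left)
    then show "\<exists>y. (\<phi> has_real_derivative y) (at t) \<and> y \<le> 0" using pder by blast
  qed simp
  then show ?thesis unfolding \<phi>_def d_def by (simp add: algebra_simps)
qed

lemma amgm:
  fixes a b s E D :: real
  assumes "a > 0" "s\<^sup>2 \<le> 4 * a * b"
  shows "s * E * D \<le> a * E\<^sup>2 + b * D\<^sup>2"
proof -
  have "0 \<le> (2*a*E - s*D)\<^sup>2" by simp
  also have "\<dots> = 4*a\<^sup>2*E\<^sup>2 - 4*a*(s*E*D) + s\<^sup>2*D\<^sup>2" by (simp add: power2_eq_square algebra_simps)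
  also have "\<dots> \<le> 4*a\<^sup>2*E\<^sup>2 - 4*a*(s*E*D) + 4*a*b*D\<^sup>2"
    using assms(2) by (intro add_left_mono mult_right_mono) auto
  also have "\<dots> = 4*a*(a * E\<^sup>2 + b * D\<^sup>2 - s*E*D)" by (simp add: power2_eq_square algebra_simps)
  finally have "0 \<le> a * E\<^sup>2 + b * D\<^sup>2 - s*E*D" using assms(1) by (simp add: zero_le_mult_iff)
  then show ?thesis by simp
qed

lemma wcs:
  fixes p q X Y :: real
  assumes "p \<ge> 0" "p + q \<ge> 0"
  shows "(p*X + (p+q)*Y)\<^sup>2 \<le> (2*p+q)*(p*X\<^sup>2 + (p+q)*Y\<^sup>2)"
proof -
  have "(2*p+q)*(p*X\<^sup>2 + (p+q)*Y\<^sup>2) - (p*X + (p+q)*Y)\<^sup>2 = p*(p+q)*(X-Y)\<^sup>2"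
    by (simp add: power2_eq_square algebra_simps)
  moreover have "p*(p+q)*(X-Y)\<^sup>2 \<ge> 0" using assms by simp
  ultimately show ?thesis by simp
qed

lemma numeric_margin:
  fixes p q K :: real
  assumes q: "q \<ge> 0" and p: "p \<ge> q + q\<^sup>2 + 3" and K: "K \<ge> 3 * p\<^sup>2"
  shows "(p - q)/2 - (2*p+q)\<^sup>2 / K \<ge> 1/20"
proof -
  have p3: "p \<ge> 3" using p q zero_le_power2[of q] by linarith
  have "p\<^sup>2 > 0" using p3 by simp
  then have Kp: "K > 0" using K by linarith
  have q1: "4*p*q \<le> 4/3 * p\<^sup>2 * q" using p3 q by (simp add: power2_eq_square mult_right_mono)
  have q2: "q\<^sup>2 \<le> p\<^sup>2 * q\<^sup>2 / 9"
  proof -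
    have "9 \<le> p*p" using p3 mult_mono[of 3 p 3 p] by simp
    then have "q\<^sup>2*9 \<le> q\<^sup>2*(p*p)" by (intro mult_left_mono) simp_all
    then show ?thesis by (simp add: power2_eq_square field_simps)
  qed
  have poly: "(25/18) * q\<^sup>2 - (4/3) * q + 7/20 \<ge> 0"
  proof -
    have "(25/18) * q\<^sup>2 - (4/3) * q + 7/20 = (25/18) * (q - 12/25)\<^sup>2 + (7/20 - 8/25)"
      by (simp add: power2_eq_square algebra_simps)
    then show ?thesis using zero_le_power2[of "q - 12/25"] by linarith
  qed
  have "(2*p+q)\<^sup>2 = 4*p\<^sup>2 + 4*p*q + q\<^sup>2" by (simp add: power2_eq_square algebra_simps)
  also have "\<dots> \<le> p\<^sup>2 * (4 + 4/3*q + q\<^sup>2/9)" using q1 q2 by (simp add: algebra_simps)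
  also have "\<dots> \<le> p\<^sup>2 * (3 * ((q\<^sup>2 + 3)/2 - 1/20))"
  proof (rule mult_left_mono)
    have "3 * ((q\<^sup>2 + 3)/2 - 1/20) - (4 + 4/3*q + q\<^sup>2/9) = 25/18*q\<^sup>2 - 4/3*q + 7/20"
      by (simp add: algebra_simps)
    then show "4 + 4/3*q + q\<^sup>2/9 \<le> 3 * ((q\<^sup>2 + 3)/2 - 1/20)" using poly by linarith
  qed simp
  also have "\<dots> = 3 * p\<^sup>2 * ((q\<^sup>2 + 3)/2 - 1/20)" by simp
  also have "\<dots> \<le> 3 * p\<^sup>2 * ((p - q)/2 - 1/20)"
    using p by (intro mult_left_mono) auto
  also have "\<dots> \<le> K * ((p - q)/2 - 1/20)"
  proof (rule mult_right_mono)
    have h: "3 \<le> p - q" using p zero_le_power2[of q] by linarith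
    then show "0 \<le> (p - q)/2 - 1/20" by (simp add: field_simps)
  qed (rule K)
  finally have "(2*p+q)\<^sup>2 / K \<le> (p - q)/2 - 1/20" using Kp by (simp add: divide_le_eq mult.commute)
  then show ?thesis by linarith
qed

lemma lag_step:
  fixes f g :: "real^'p \<Rightarrow> real" and h :: "real^'q \<Rightarrow> real"
    and A :: "real^'p^'n" and B :: "real^'q^'n"
  assumes xs: "f x1 + c0 \<bullet> (A *v x1) + Lx / 2 * (norm (x1 - x0))\<^sup>2
          + (x1 - x0) \<bullet> (gx + \<beta> *\<^sub>R (transpose A *v (A *v x0 + B *v y0)))
        \<le> f x0 + c0 \<bullet> (A *v x0) + Lx / 2 * (norm (x0 - x0))\<^sup>2
          + (x0 - x0) \<bullet> (gx + \<beta> *\<^sub>R (transpose A *v (A *v x0 + B *v y0)))"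
  and ys: "c0 \<bullet> (B *v y1) + Ly / 2 * (norm (y1 - y0))\<^sup>2
          + \<beta> / 2 * (norm (A *v x1 + B *v y1))\<^sup>2 + (y1 - y0) \<bullet> gy
        \<le> c0 \<bullet> (B *v y0) + Ly / 2 * (norm (y0 - y0))\<^sup>2
          + \<beta> / 2 * (norm (A *v x1 + B *v y0))\<^sup>2 + (y0 - y0) \<bullet> gy"
  and gd: "g x1 \<le> g x0 + gx \<bullet> (x1 - x0) + Lg/2 * (norm (x1 - x0))\<^sup>2"
  and hd: "h y1 \<le> h y0 + gy \<bullet> (y1 - y0) + Lh/2 * (norm (y1 - y0))\<^sup>2"
  and Af: "(norm (A *v (x1 - x0)))\<^sup>2 \<le> LA * (norm (x1 - x0))\<^sup>2"
  and c1: "c1 = c0 + \<beta> *\<^sub>R (A *v x1 + B *v y1)"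
  and b0: "\<beta> \<ge> 0"
  shows "g x1 + f x1 + h y1 + c1 \<bullet> (A *v x1 + B *v y1) + \<beta>/2 * (norm (A *v x1 + B *v y1))\<^sup>2
     \<le> g x0 + f x0 + h y0 + c0 \<bullet> (A *v x0 + B *v y0) + \<beta>/2 * (norm (A *v x0 + B *v y0))\<^sup>2
        - (Lx - Lg - \<beta> * LA)/2 * (norm (x1 - x0))\<^sup>2 - (Ly - Lh)/2 * (norm (y1 - y0))\<^sup>2
        + \<beta> * (norm (A *v x1 + B *v y1))\<^sup>2"
proof -
  define r0 where "r0 = A *v x0 + B *v y0"
  define R1 where "R1 = A *v x1 + B *v y1"
  define dx where "dx = x1 - x0"
  define dy where "dy = y1 - y0"
  define nx where "nx = (norm dx)\<^sup>2"
  define ny where "ny = (norm dy)\<^sup>2"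
  define s where "s = dx \<bullet> (transpose A *v r0)"
  have mid: "A *v x1 + B *v y0 = r0 + A *v dx"
    unfolding r0_def dx_def by (simp add: matrix_vector_mult_diff_distrib)
  have m2: "(norm (A *v x1 + B *v y0))\<^sup>2 = (norm r0)\<^sup>2 + 2 * s + (norm (A *v dx))\<^sup>2"
    unfolding mid norm_add_sq s_def using mv_dot_transpose[of A dx r0] by (simp add: inner_commute)
  have m3: "\<beta>/2 * (norm (A *v x1 + B *v y0))\<^sup>2 \<le> \<beta>/2 * (norm r0)\<^sup>2 + \<beta> * s + \<beta>/2 * (LA * nx)"
  proof -
    have "\<beta>/2 * (norm (A *v dx))\<^sup>2 \<le> \<beta>/2 * (LA * nx)"
      using Af b0 unfolding nx_def dx_def by (intro mult_left_mono) auto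
    then show ?thesis unfolding m2 by (simp add: algebra_simps)
  qed
  have xs': "f x1 + c0 \<bullet> (A *v x1) + Lx / 2 * nx + gx \<bullet> dx + \<beta> * s \<le> f x0 + c0 \<bullet> (A *v x0)"
    using xs unfolding nx_def s_def dx_def r0_def by (simp add: inner_add_right inner_commute)
  have ys': "c0 \<bullet> (B *v y1) + Ly / 2 * ny + \<beta> / 2 * (norm R1)\<^sup>2 + dy \<bullet> gy
        \<le> c0 \<bullet> (B *v y0) + \<beta> / 2 * (norm (A *v x1 + B *v y0))\<^sup>2"
    using ys unfolding ny_def dy_def R1_def by simp
  have gd': "g x1 \<le> g x0 + gx \<bullet> dx + Lg/2 * nx" using gd unfolding nx_def dx_def .
  have hd': "h y1 \<le> h y0 + dy \<bullet> gy + Lh/2 * ny" using hd unfolding ny_def dy_def by (simp add: inner_commute)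
  have c1R: "c1 \<bullet> R1 = c0 \<bullet> (A *v x1) + c0 \<bullet> (B *v y1) + \<beta> * (norm R1)\<^sup>2"
    unfolding c1 R1_def by (simp add: inner_add_left inner_add_right power2_norm_eq_inner distrib_left)
  have c0r: "c0 \<bullet> r0 = c0 \<bullet> (A *v x0) + c0 \<bullet> (B *v y0)"
    unfolding r0_def by (simp add: inner_add_right)
  have "g x1 + f x1 + h y1 + c1 \<bullet> R1 + \<beta>/2 * (norm R1)\<^sup>2
     \<le> g x0 + f x0 + h y0 + c0 \<bullet> r0 + \<beta>/2 * (norm r0)\<^sup>2
        - (Lx/2 * nx - Lg/2 * nx - \<beta>/2 * (LA * nx)) - (Ly/2 * ny - Lh/2 * ny) + \<beta> * (norm R1)\<^sup>2"
    using xs' ys' gd' hd' c1R c0r m3 by linarith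
  also have "\<dots> = g x0 + f x0 + h y0 + c0 \<bullet> r0 + \<beta>/2 * (norm r0)\<^sup>2
        - (Lx - Lg - \<beta> * LA)/2 * nx - (Ly - Lh)/2 * ny + \<beta> * (norm R1)\<^sup>2"
    by (simp add: field_simps)
  finally show ?thesis unfolding R1_def r0_def nx_def ny_def dx_def dy_def .
qed

lemma y_opt:
  fixes B :: "real^'q^'n" and ax :: "real^'n"
  assumes ys: "\<And>v. c \<bullet> (B *v Y) + Ly / 2 * (norm (Y - y0))\<^sup>2
          + \<beta> / 2 * (norm (ax + B *v Y))\<^sup>2 + (Y - y0) \<bullet> gy
        \<le> c \<bullet> (B *v v) + Ly / 2 * (norm (v - y0))\<^sup>2
          + \<beta> / 2 * (norm (ax + B *v v))\<^sup>2 + (v - y0) \<bullet> gy"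
  shows "transpose B *v (c + \<beta> *\<^sub>R (ax + B *v Y)) = - (gy + Ly *\<^sub>R (Y - y0))"
proof -
  define R where "R = ax + B *v Y"
  define dl where "dl = Y - y0"
  define G where "G = transpose B *v c + Ly *\<^sub>R dl + \<beta> *\<^sub>R (transpose B *v R) + gy"
  have GG: "G \<bullet> G = c \<bullet> (B *v G) + Ly * (dl \<bullet> G) + \<beta> * (R \<bullet> (B *v G)) + G \<bullet> gy"
  proof -
    have Geq: "G = transpose B *v c + Ly *\<^sub>R dl + \<beta> *\<^sub>R (transpose B *v R) + gy" by (simp add: G_def)
    have "G \<bullet> G = (transpose B *v c + Ly *\<^sub>R dl + \<beta> *\<^sub>R (transpose B *v R) + gy) \<bullet> G"
      by (subst (1) Geq) (rule refl)
    also have "\<dots> = (transpose B *v c) \<bullet> G + Ly * (dl \<bullet> G) + \<beta> * ((transpose B *v R) \<bullet> G) + gy \<bullet> G"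
      by (simp add: inner_add_left)
    also have "\<dots> = c \<bullet> (B *v G) + Ly * (dl \<bullet> G) + \<beta> * (R \<bullet> (B *v G)) + G \<bullet> gy"
      using mv_dot_transpose[of B G c] mv_dot_transpose[of B G R] by (simp add: inner_commute)
    finally show ?thesis .
  qed
  have "\<And>t. 0 \<le> t * (G \<bullet> G) + t\<^sup>2 * (Ly/2 * (norm G)\<^sup>2 + \<beta>/2 * (norm (B *v G))\<^sup>2)"
  proof -
    fix t :: real
    have e1: "ax + B *v (Y + t *\<^sub>R G) = R + t *\<^sub>R (B *v G)"
      unfolding R_def by (simp add: matrix_vector_right_distrib matrix_vector_mult_scaleR)
    have e2: "Y + t *\<^sub>R G - y0 = dl + t *\<^sub>R G" unfolding dl_def by simp
    have n1: "(norm (R + t *\<^sub>R (B *v G)))\<^sup>2 = (norm R)\<^sup>2 + 2 * t * (R \<bullet> (B *v G)) + t\<^sup>2 * (norm (B *v G))\<^sup>2"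
      by (simp add: norm_add_sq power_mult_distrib)
    have n2: "(norm (dl + t *\<^sub>R G))\<^sup>2 = (norm dl)\<^sup>2 + 2 * t * (dl \<bullet> G) + t\<^sup>2 * (norm G)\<^sup>2"
      by (simp add: norm_add_sq power_mult_distrib)
    have i1: "c \<bullet> (B *v (Y + t *\<^sub>R G)) = c \<bullet> (B *v Y) + t * (c \<bullet> (B *v G))"
      by (simp add: matrix_vector_right_distrib matrix_vector_mult_scaleR inner_add_right)
    have i2: "(dl + t *\<^sub>R G) \<bullet> gy = dl \<bullet> gy + t * (G \<bullet> gy)"
      by (simp add: inner_add_left)
    have "c \<bullet> (B *v Y) + Ly / 2 * (norm dl)\<^sup>2 + \<beta> / 2 * (norm R)\<^sup>2 + dl \<bullet> gy
        \<le> c \<bullet> (B *v Y) + t * (c \<bullet> (B *v G)) + Ly / 2 * ((norm dl)\<^sup>2 + 2 * t * (dl \<bullet> G) + t\<^sup>2 * (norm G)\<^sup>2)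
          + \<beta> / 2 * ((norm R)\<^sup>2 + 2 * t * (R \<bullet> (B *v G)) + t\<^sup>2 * (norm (B *v G))\<^sup>2) + (dl \<bullet> gy + t * (G \<bullet> gy))"
      using ys[of "Y + t *\<^sub>R G"] unfolding e1 e2 n1 n2 i1 i2 R_def[symmetric] dl_def[symmetric] .
    then show "0 \<le> t * (G \<bullet> G) + t\<^sup>2 * (Ly/2 * (norm G)\<^sup>2 + \<beta>/2 * (norm (B *v G))\<^sup>2)"
      unfolding GG by (simp add: algebra_simps)
  qed
  from quad_zero[OF this] have "G = 0" by simp
  then show ?thesis unfolding G_def R_def dl_def
    by (simp add: matrix_vector_right_distrib matrix_vector_mult_scaleR algebra_simps eq_neg_iff_add_eq_0)
qed

lemma gamma_bound:
  fixes B :: "real^'q^'n"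
  assumes ray2: "\<And>u. lam * (norm (B *v u))\<^sup>2 \<le> (norm (transpose B *v (B *v u)))\<^sup>2"
    and o1: "transpose B *v c2 = - (gh1 + Ly *\<^sub>R (y2 - y1))"
    and o0: "transpose B *v c1 = - (gh0 + Ly *\<^sub>R (y1 - y0))"
    and c2: "c2 = c1 + \<beta> *\<^sub>R (B *v d)"
    and lip: "norm (gh1 - gh0) \<le> Lh * norm (y1 - y0)"
    and Ly: "Ly \<ge> 0"
  shows "lam * \<beta>\<^sup>2 * (norm (B *v d))\<^sup>2 \<le> (Ly * norm (y2 - y1) + (Ly + Lh) * norm (y1 - y0))\<^sup>2"
proof -
  have bd: "B *v (\<beta> *\<^sub>R d) = c2 - c1" using c2 by (simp add: matrix_vector_mult_scaleR)
  have "transpose B *v (B *v (\<beta> *\<^sub>R d)) = transpose B *v c2 - transpose B *v c1"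
    unfolding bd by (simp add: matrix_vector_mult_diff_distrib)
  also have "\<dots> = - (gh1 - gh0) - Ly *\<^sub>R (y2 - y1) + Ly *\<^sub>R (y1 - y0)"
    unfolding o1 o0 by (simp add: algebra_simps)
  finally have eq: "transpose B *v (B *v (\<beta> *\<^sub>R d)) = - (gh1 - gh0) - Ly *\<^sub>R (y2 - y1) + Ly *\<^sub>R (y1 - y0)" .
  have "norm (- (gh1 - gh0) - Ly *\<^sub>R (y2 - y1) + Ly *\<^sub>R (y1 - y0))
      \<le> norm (gh1 - gh0) + norm (Ly *\<^sub>R (y2 - y1)) + norm (Ly *\<^sub>R (y1 - y0))"
    using norm_triangle_ineq[of "- (gh1 - gh0) - Ly *\<^sub>R (y2 - y1)" "Ly *\<^sub>R (y1 - y0)"]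
      norm_triangle_ineq4[of "- (gh1 - gh0)" "Ly *\<^sub>R (y2 - y1)"] norm_minus_cancel[of "gh1 - gh0"]
    by linarith
  also have "\<dots> \<le> Ly * norm (y2 - y1) + (Ly + Lh) * norm (y1 - y0)"
  proof -
    have "norm (Ly *\<^sub>R (y2 - y1)) = Ly * norm (y2 - y1)" "norm (Ly *\<^sub>R (y1 - y0)) = Ly * norm (y1 - y0)"
      using Ly by (simp_all del: scaleR_right_diff_distrib)
    moreover have "(Ly + Lh) * norm (y1 - y0) = Ly * norm (y1 - y0) + Lh * norm (y1 - y0)" by (simp add: distrib_right)
    ultimately show ?thesis using lip by linarith
  qed
  finally have nb: "norm (transpose B *v (B *v (\<beta> *\<^sub>R d))) \<le> Ly * norm (y2 - y1) + (Ly + Lh) * norm (y1 - y0)"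
    unfolding eq .
  have "lam * \<beta>\<^sup>2 * (norm (B *v d))\<^sup>2 = lam * (norm (B *v (\<beta> *\<^sub>R d)))\<^sup>2"
    by (simp add: matrix_vector_mult_scaleR power_mult_distrib)
  also have "\<dots> \<le> (norm (transpose B *v (B *v (\<beta> *\<^sub>R d))))\<^sup>2" by (rule ray2)
  also have "\<dots> \<le> (Ly * norm (y2 - y1) + (Ly + Lh) * norm (y1 - y0))\<^sup>2"
    using nb by (intro power_mono) auto
  finally show ?thesis .
qed

lemma lower_step:
  fixes B :: "real^'q^'n" and h :: "real^'q \<Rightarrow> real"
  assumes o0: "transpose B *v c1 = - (gh0 + Ly *\<^sub>R (Y - y0))"
    and ray1: "lam * (norm d)\<^sup>2 \<le> (norm (B *v d))\<^sup>2"
    and hdesc: "h (Y - d) \<le> h Y + ghY \<bullet> ((Y - d) - Y) + Lh/2 * (norm ((Y - d) - Y))\<^sup>2"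
    and lip: "norm (ghY - gh0) \<le> Lh * norm (Y - y0)"
    and K: "K = \<beta> * lam" and Cp: "C > 0" and CK: "(Ly + Lh)\<^sup>2 \<le> C * K" and K2: "K \<ge> 2 * Lh"
    and b0: "\<beta> \<ge> 0" and Ly: "Ly \<ge> 0"
  shows "h (Y - d) \<le> h Y + c1 \<bullet> (B *v d) + \<beta>/2 * (norm (B *v d))\<^sup>2 + C * (norm (Y - y0))\<^sup>2"
proof -
  define E where "E = norm (Y - y0)"
  define D where "D = norm d"
  have cB: "c1 \<bullet> (B *v d) = - (gh0 \<bullet> d) - Ly * ((Y - y0) \<bullet> d)"
  proof -
    have "c1 \<bullet> (B *v d) = d \<bullet> (transpose B *v c1)" using mv_dot_transpose[of B d c1] by (simp add: inner_commute)
    also have "\<dots> = - (d \<bullet> gh0) - Ly * (d \<bullet> (Y - y0))" unfolding o0 by (simp add: inner_add_right inner_diff_right)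
    finally show ?thesis by (simp add: inner_commute)
  qed
  have hd': "h (Y - d) \<le> h Y - ghY \<bullet> d + Lh/2 * D\<^sup>2" using hdesc unfolding D_def by simp
  have t1: "(gh0 - ghY) \<bullet> d \<le> Lh * E * D"
  proof -
    have "(gh0 - ghY) \<bullet> d \<le> norm (gh0 - ghY) * norm d" by (rule norm_cauchy_schwarz)
    also have "\<dots> \<le> Lh * E * D" unfolding E_def D_def using lip
      by (metis mult_right_mono norm_ge_zero norm_minus_commute)
    finally show ?thesis .
  qed
  have t2: "(Y - y0) \<bullet> d \<le> E * D"
    using norm_cauchy_schwarz[of "Y - y0" d] unfolding E_def D_def by simp
  have t2': "Ly * ((Y - y0) \<bullet> d) \<le> Ly * (E * D)" using mult_left_mono[OF t2 Ly] by simp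
  have am: "(Lh + Ly) * E * D \<le> C * E\<^sup>2 + K/4 * D\<^sup>2"
    by (rule amgm[OF Cp]) (use CK in \<open>simp add: algebra_simps\<close>)
  have bB: "\<beta>/2 * (lam * D\<^sup>2) \<le> \<beta>/2 * (norm (B *v d))\<^sup>2"
    using ray1 b0 unfolding D_def by (intro mult_left_mono) auto
  have KD: "Lh/2 * D\<^sup>2 + K/4 * D\<^sup>2 \<le> \<beta>/2 * (lam * D\<^sup>2)"
  proof -
    have "Lh/2 * D\<^sup>2 + K/4 * D\<^sup>2 = (Lh/2 + K/4) * D\<^sup>2" by (simp add: algebra_simps)
    also have "\<dots> \<le> (K/2) * D\<^sup>2" using K2 by (intro mult_right_mono) auto
    also have "\<dots> = \<beta>/2 * (lam * D\<^sup>2)" unfolding K by simp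
    finally show ?thesis .
  qed
  have "(Lh + Ly) * E * D = Lh * E * D + Ly * (E * D)" by (simp add: algebra_simps)
  moreover have "(gh0 - ghY) \<bullet> d = gh0 \<bullet> d - ghY \<bullet> d" by (simp add: inner_diff_left)
  ultimately show ?thesis
    using cB hd' t1 t2' am bB KD unfolding E_def[symmetric] by linarith
qed

theorem corollary2:
  fixes f g :: "real^'p \<Rightarrow> real"
    and h :: "real^'q \<Rightarrow> real"
    and gradg :: "real^'p \<Rightarrow> real^'p"
    and gradh :: "real^'q \<Rightarrow> real^'q"
    and A :: "real^'p^'n" and B :: "real^'q^'n"
    and Lg Lh Lx Ly \<beta> :: real
    and x :: "nat \<Rightarrow> real^'p" and y :: "nat \<Rightarrow> real^'q" and \<gamma> :: "nat \<Rightarrow> real^'n"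
  assumes h_grad: "\<And>v. (h has_derivative (\<lambda>d. gradh v \<bullet> d)) (at v)"
    and h_lip: "Lh-lipschitz_on UNIV gradh"
    and g_grad: "\<And>u. (g has_derivative (\<lambda>d. gradg u \<bullet> d)) (at u)"
    and g_lip: "Lg-lipschitz_on UNIV gradg"
    and lower_bdd: "\<exists>c. \<forall>u v. A *v u + B *v v = 0 \<longrightarrow> c \<le> g u + f u + h v"
    and coercive: "\<And>X Y. (\<forall>k. A *v X k + B *v Y k = 0) \<Longrightarrow>
                     filterlim (\<lambda>k. norm (Y k)) at_top sequentially \<Longrightarrow>
                     filterlim (\<lambda>k. g (X k) + f (X k) + h (Y k)) at_top sequentially"
    and B_rank: "rank B = CARD('q)"
    and im_AB: "range (\<lambda>u. A *v u) \<subseteq> range (\<lambda>v. B *v v)"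
    and pos: "Lx > 0" "Ly > 0" "\<beta> > 0"
    and x_step: "\<And>k u.
        f (x (Suc k)) + \<gamma> k \<bullet> (A *v x (Suc k)) + Lx / 2 * (norm (x (Suc k) - x k))\<^sup>2
          + (x (Suc k) - x k) \<bullet> (gradg (x k) + \<beta> *\<^sub>R (transpose A *v (A *v x k + B *v y k)))
        \<le> f u + \<gamma> k \<bullet> (A *v u) + Lx / 2 * (norm (u - x k))\<^sup>2
          + (u - x k) \<bullet> (gradg (x k) + \<beta> *\<^sub>R (transpose A *v (A *v x k + B *v y k)))"
    and y_step: "\<And>k v.
        \<gamma> k \<bullet> (B *v y (Suc k)) + Ly / 2 * (norm (y (Suc k) - y k))\<^sup>2
          + \<beta> / 2 * (norm (A *v x (Suc k) + B *v y (Suc k)))\<^sup>2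
          + (y (Suc k) - y k) \<bullet> gradh (y k)
        \<le> \<gamma> k \<bullet> (B *v v) + Ly / 2 * (norm (v - y k))\<^sup>2
          + \<beta> / 2 * (norm (A *v x (Suc k) + B *v v))\<^sup>2
          + (v - y k) \<bullet> gradh (y k)"
    and \<gamma>_step: "\<And>k. \<gamma> (Suc k) = \<gamma> k + \<beta> *\<^sub>R (A *v x (Suc k) + B *v y (Suc k))"
    and Lx_bd: "Lx \<ge> Lg + \<beta> * max_eigenvalue (transpose A ** A) + 6 * (Lg + Lh)\<^sup>2 + 1"
    and Ly_bd: "Ly \<ge> (Lg + Lh) + (Lg + Lh)\<^sup>2 + 3"
    and \<beta>_bd: "\<beta> \<ge> Max {((Lg + Lh) + Ly + 2) / min_eigenvalue (transpose B ** B),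
                        3 * ((Lg + Lh)\<^sup>2 + Ly\<^sup>2) / (min_eigenvalue (transpose B ** B) * ((Ly + (Lg + Lh)\<^sup>2) / 2)),
                        3 * Ly\<^sup>2 / min_eigenvalue (transpose B ** B)}"
  shows "convergent (\<lambda>k. g (x k) + f (x k) + h (y k))"
proof -
  define lam where "lam = min_eigenvalue (transpose B ** B)"
  define LA where "LA = max_eigenvalue (transpose A ** A)"
  define K where "K = \<beta> * lam"
  have Lg0: "Lg \<ge> 0" using g_lip lipschitz_on_nonneg by blast
  have Lh0: "Lh \<ge> 0" using h_lip lipschitz_on_nonneg by blast
  have BF: "lam > 0 \<and> (\<forall>u. lam * (norm u)\<^sup>2 \<le> (norm (B *v u))\<^sup>2) \<and>
      (\<forall>u. lam * (norm (B *v u))\<^sup>2 \<le> (norm (transpose B *v (B *v u)))\<^sup>2)"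
    unfolding lam_def by (rule B_facts[OF B_rank])
  then have lam0: "lam > 0" and ray1: "\<And>u. lam * (norm u)\<^sup>2 \<le> (norm (B *v u))\<^sup>2"
    and ray2: "\<And>u. lam * (norm (B *v u))\<^sup>2 \<le> (norm (transpose B *v (B *v u)))\<^sup>2" by auto
  have Af: "\<And>u. (norm (A *v u))\<^sup>2 \<le> LA * (norm u)\<^sup>2" unfolding LA_def by (rule A_facts)
  have b0: "\<beta> \<ge> 0" using pos by simp
  have Kge: "K \<ge> 3 * Ly\<^sup>2"
  proof -
    have "3 * Ly\<^sup>2 / lam \<le> Max {((Lg + Lh) + Ly + 2) / lam,
                        3 * ((Lg + Lh)\<^sup>2 + Ly\<^sup>2) / (lam * ((Ly + (Lg + Lh)\<^sup>2) / 2)),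
                        3 * Ly\<^sup>2 / lam}" by (rule Max_ge) auto
    also have "\<dots> \<le> \<beta>" using \<beta>_bd unfolding lam_def .
    finally have "3 * Ly\<^sup>2 / lam \<le> \<beta>" .
    then show ?thesis using lam0 unfolding K_def by (simp add: divide_le_eq)
  qed
  have Lyq: "Ly \<ge> Lh + Lh\<^sup>2 + 3"
  proof -
    have "Lh\<^sup>2 \<le> (Lg + Lh)\<^sup>2" using Lg0 Lh0 by (intro power_mono) auto
    then show ?thesis using Ly_bd Lg0 by linarith
  qed
  have Ly3: "Ly \<ge> 3" using Lyq Lh0 zero_le_power2[of Lh] by linarith
  have Ly0: "Ly \<ge> 0" using Ly3 by linarith
  have K2: "K \<ge> 2 * Lh"
  proof -
    have "3 * Ly \<le> Ly * Ly" using Ly3 by (intro mult_right_mono) auto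
    moreover have "Lh * Lh \<ge> 0" using Lh0 by simp
    ultimately show ?thesis using Kge Lyq Lh0 unfolding power2_eq_square by linarith
  qed
  have Kpos: "K > 0" using Kge Ly3 by (smt (verit) zero_less_power)
  define C where "C = (Ly + Lh) * (2 * Ly + Lh) / K"
  have Cp: "C > 0" unfolding C_def using Kpos Ly3 Lh0 by simp
  have CK: "(Ly + Lh)\<^sup>2 \<le> C * K"
  proof -
    have "C * K = (Ly + Lh) * (2 * Ly + Lh)" unfolding C_def using Kpos by simp
    moreover have "(Ly + Lh) * (Ly + Lh) \<le> (Ly + Lh) * (2 * Ly + Lh)" using Ly0 Lh0 by (intro mult_left_mono) auto
    ultimately show ?thesis by (simp add: power2_eq_square)
  qed
  have "\<forall>k. \<exists>w. B *v w = A *v x k"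
  proof
    fix k
    have "A *v x k \<in> range (\<lambda>u. A *v u)" by simp
    with im_AB have "A *v x k \<in> range (\<lambda>v. B *v v)" by blast
    then show "\<exists>w. B *v w = A *v x k" by (metis (no_types) imageE)
  qed
  then obtain W where W: "\<And>k. B *v W k = A *v x k" by metis
  define r where "r k = A *v x k + B *v y k" for k
  define D where "D k = W k + y k" for k
  have BD: "B *v D k = r k" for k by (simp add: D_def r_def W matrix_vector_right_distrib)
  define F where "F k = g (x k) + f (x k) + h (y k)" for k
  define Lag where "Lag k = F k + \<gamma> k \<bullet> r k + \<beta>/2 * (norm (r k))\<^sup>2" for k
  define ye where "ye k = y (Suc k) - y k" for k
  define \<Phi> where "\<Phi> k = Lag (Suc k) + C * (norm (ye k))\<^sup>2" for k
  have opt: "transpose B *v \<gamma> (Suc k) = - (gradh (y k) + Ly *\<^sub>R (y (Suc k) - y k))" for k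
    unfolding \<gamma>_step by (rule y_opt) (rule y_step)
  have lagstep: "Lag (Suc k) \<le> Lag k - (Lx - Lg - \<beta> * LA)/2 * (norm (x (Suc k) - x k))\<^sup>2
      - (Ly - Lh)/2 * (norm (ye k))\<^sup>2 + \<beta> * (norm (r (Suc k)))\<^sup>2" for k
    unfolding Lag_def F_def r_def ye_def
    by (rule lag_step[OF x_step[of k "x k"] y_step[of k "y k"]
          descent[OF g_grad g_lip, where x="x k" and y="x (Suc k)"]
          descent[OF h_grad h_lip, where x="y k" and y="y (Suc k)"] Af \<gamma>_step b0])
  have hlip: "norm (gradh a - gradh b) \<le> Lh * norm (a - b)" for a b
    using lipschitz_onD[OF h_lip, of a b] by (simp add: dist_norm)
  have gb: "lam * \<beta>\<^sup>2 * (norm (r (Suc (Suc k))))\<^sup>2 \<le> (Ly * norm (ye (Suc k)) + (Ly + Lh) * norm (ye k))\<^sup>2" for k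
  proof -
    have c2: "\<gamma> (Suc (Suc k)) = \<gamma> (Suc k) + \<beta> *\<^sub>R (B *v D (Suc (Suc k)))"
      using \<gamma>_step[of "Suc k"] unfolding BD r_def .
    show ?thesis
      using gamma_bound[OF ray2 opt[of "Suc k"] opt[of k] c2 hlip Ly0] unfolding BD ye_def .
  qed
  have rb: "\<beta> * (norm (r (Suc (Suc k))))\<^sup>2 \<le> (2*Ly+Lh)\<^sup>2 / K * (norm (ye (Suc k)))\<^sup>2
      - C * (norm (ye (Suc k)))\<^sup>2 + C * (norm (ye k))\<^sup>2" for k
  proof -
    have "K * (\<beta> * (norm (r (Suc (Suc k))))\<^sup>2) = lam * \<beta>\<^sup>2 * (norm (r (Suc (Suc k))))\<^sup>2"
      unfolding K_def by (simp add: power2_eq_square)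
    also have "\<dots> \<le> (Ly * norm (ye (Suc k)) + (Ly + Lh) * norm (ye k))\<^sup>2" by (rule gb)
    also have "\<dots> \<le> (2*Ly+Lh) * (Ly * (norm (ye (Suc k)))\<^sup>2 + (Ly + Lh) * (norm (ye k))\<^sup>2)"
      by (rule wcs) (use Ly0 Lh0 in auto)
    finally have "\<beta> * (norm (r (Suc (Suc k))))\<^sup>2 \<le> (2*Ly+Lh) * (Ly * (norm (ye (Suc k)))\<^sup>2 + (Ly + Lh) * (norm (ye k))\<^sup>2) / K"
      using Kpos by (simp add: pos_le_divide_eq mult.commute)
    also have "\<dots> = (2*Ly+Lh)\<^sup>2 / K * (norm (ye (Suc k)))\<^sup>2
      - C * (norm (ye (Suc k)))\<^sup>2 + C * (norm (ye k))\<^sup>2"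
      unfolding C_def using Kpos by (simp add: field_simps power2_eq_square)
    finally show ?thesis .
  qed
  have marg: "(Ly - Lh)/2 - (2*Ly+Lh)\<^sup>2 / K \<ge> 1/20" by (rule numeric_margin[OF Lh0 Lyq Kge])
  have phistep: "\<Phi> (Suc k) \<le> \<Phi> k - 1/20 * (norm (ye (Suc k)))\<^sup>2" for k
  proof -
    define na where "na = (norm (ye (Suc k)))\<^sup>2"
    define M where "M = (Ly - Lh)/2 - (2*Ly+Lh)\<^sup>2 / K"
    have dx: "(Lx - Lg - \<beta> * LA)/2 * (norm (x (Suc (Suc k)) - x (Suc k)))\<^sup>2 \<ge> 0"
    proof -
      have "Lx - Lg - \<beta> * LA \<ge> 0" using Lx_bd zero_le_power2[of "Lg+Lh"] unfolding LA_def by linarith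
      then show ?thesis by simp
    qed
    have mm: "1/20 * na \<le> M * na" using marg unfolding M_def na_def by (intro mult_right_mono) auto
    have Mexp: "M * na = (Ly - Lh)/2 * na - (2*Ly+Lh)\<^sup>2 / K * na" unfolding M_def by (simp add: algebra_simps)
    show ?thesis using lagstep[of "Suc k"] rb[of k] dx mm Mexp unfolding \<Phi>_def na_def by linarith
  qed
  have lowb: "g (x (Suc k)) + f (x (Suc k)) + h (- W (Suc k)) \<le> \<Phi> k" for k
  proof -
    have yd: "y (Suc k) - D (Suc k) = - W (Suc k)" unfolding D_def by simp
    have "h (y (Suc k) - D (Suc k)) \<le> h (y (Suc k)) + \<gamma> (Suc k) \<bullet> (B *v D (Suc k))
        + \<beta>/2 * (norm (B *v D (Suc k)))\<^sup>2 + C * (norm (y (Suc k) - y k))\<^sup>2"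
      by (rule lower_step[OF opt[of k] ray1 descent[OF h_grad h_lip] hlip K_def Cp CK K2 b0 Ly0])
    then show ?thesis unfolding yd BD \<Phi>_def Lag_def F_def ye_def by simp
  qed
  obtain c0 where c0: "\<And>u v. A *v u + B *v v = 0 \<Longrightarrow> c0 \<le> g u + f u + h v" using lower_bdd by blast
  have feas: "A *v x k + B *v (- W k) = 0" for k
    using matrix_vector_mult_diff_distrib[of B 0 "W k"] W[of k] by simp
  have \<Phi>low: "c0 \<le> \<Phi> k" for k using c0[OF feas[of "Suc k"]] lowb[of k] by linarith
  have dec: "decseq \<Phi>"
  proof (rule decseq_SucI)
    fix k show "\<Phi> (Suc k) \<le> \<Phi> k" using phistep[of k] zero_le_power2[of "norm (ye (Suc k))"] by linarith
  qed
  obtain L where \<Phi>L: "\<Phi> \<longlonglongrightarrow> L" using decseq_convergent[OF dec, of c0] \<Phi>low by blast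
  have d0: "(\<lambda>k. \<Phi> k - \<Phi> (Suc k)) \<longlonglongrightarrow> 0"
    using tendsto_diff[OF \<Phi>L LIMSEQ_Suc[OF \<Phi>L]] by simp
  have ya0: "(\<lambda>k. ye (Suc k)) \<longlonglongrightarrow> 0"
  proof (rule Lim_null_comparison)
    show "\<forall>\<^sub>F k in sequentially. norm (ye (Suc k)) \<le> sqrt (20 * (\<Phi> k - \<Phi> (Suc k)))"
    proof (intro always_eventually allI real_le_rsqrt)
      fix k show "(norm (ye (Suc k)))\<^sup>2 \<le> 20 * (\<Phi> k - \<Phi> (Suc k))" using phistep[of k] by (simp add: field_simps)
    qed
    show "(\<lambda>k. sqrt (20 * (\<Phi> k - \<Phi> (Suc k)))) \<longlonglongrightarrow> 0"
      using tendsto_real_sqrt[OF tendsto_mult_right_zero[OF d0, of 20]] by simp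
  qed
  have ye0: "ye \<longlonglongrightarrow> 0" by (rule LIMSEQ_imp_Suc, rule ya0)
  have ya0': "(\<lambda>k. norm (ye (Suc k))) \<longlonglongrightarrow> 0" using tendsto_norm_zero[OF ya0] .
  have ye0': "(\<lambda>k. norm (ye k)) \<longlonglongrightarrow> 0" using tendsto_norm_zero[OF ye0] .
  have lb2: "lam * \<beta>\<^sup>2 > 0" using lam0 pos by simp
  have rr0: "(\<lambda>k. r (Suc (Suc k))) \<longlonglongrightarrow> 0"
  proof (rule Lim_null_comparison)
    show "\<forall>\<^sub>F k in sequentially. norm (r (Suc (Suc k))) \<le> sqrt ((Ly * norm (ye (Suc k)) + (Ly + Lh) * norm (ye k))\<^sup>2 / (lam * \<beta>\<^sup>2))"
    proof (intro always_eventually allI real_le_rsqrt)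
      fix k show "(norm (r (Suc (Suc k))))\<^sup>2 \<le> (Ly * norm (ye (Suc k)) + (Ly + Lh) * norm (ye k))\<^sup>2 / (lam * \<beta>\<^sup>2)"
        using gb[of k] lb2 by (simp add: pos_le_divide_eq mult.commute)
    qed
    show "(\<lambda>k. sqrt ((Ly * norm (ye (Suc k)) + (Ly + Lh) * norm (ye k))\<^sup>2 / (lam * \<beta>\<^sup>2))) \<longlonglongrightarrow> 0"
      using tendsto_real_sqrt[OF tendsto_divide[OF tendsto_power[OF tendsto_add[OF tendsto_mult_right_zero[OF ya0', of Ly] tendsto_mult_right_zero[OF ye0', of "Ly + Lh"]], of 2] tendsto_const[of "lam * \<beta>\<^sup>2"]]] lam0 pos
      by simp
  qed
  have r0: "r \<longlonglongrightarrow> 0" by (rule LIMSEQ_imp_Suc, rule LIMSEQ_imp_Suc, rule rr0)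
  have D0: "D \<longlonglongrightarrow> 0"
  proof (rule Lim_null_comparison)
    show "\<forall>\<^sub>F k in sequentially. norm (D k) \<le> sqrt ((norm (r k))\<^sup>2 / lam)"
    proof (intro always_eventually allI real_le_rsqrt)
      fix k show "(norm (D k))\<^sup>2 \<le> (norm (r k))\<^sup>2 / lam"
        using ray1[of "D k"] lam0 unfolding BD by (simp add: pos_le_divide_eq mult.commute)
    qed
    show "(\<lambda>k. sqrt ((norm (r k))\<^sup>2 / lam)) \<longlonglongrightarrow> 0"
      using tendsto_real_sqrt[OF tendsto_divide[OF tendsto_power[OF tendsto_norm_zero[OF r0], of 2] tendsto_const[of lam]]] lam0
      by simp
  qed
  have Wb: "\<exists>R. \<forall>k. norm (W (Suc k)) \<le> R"
  proof (rule ccontr)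
    assume "\<not> ?thesis"
    then have "\<forall>n::nat. \<exists>k. real n < norm (W (Suc k))" by (meson not_le)
    then obtain \<sigma> where \<sigma>: "\<And>n. real n < norm (W (Suc (\<sigma> n)))" by metis
    define X where "X n = x (Suc (\<sigma> n))" for n
    define Y where "Y n = - W (Suc (\<sigma> n))" for n
    have fe: "\<forall>n. A *v X n + B *v Y n = 0" unfolding X_def Y_def using feas by blast
    have "filterlim (\<lambda>n. norm (Y n)) at_top sequentially"
    proof (rule filterlim_at_top_mono[OF filterlim_real_sequentially])
      show "\<forall>\<^sub>F n in sequentially. real n \<le> norm (Y n)"
        unfolding Y_def using \<sigma> by (simp add: less_imp_le)
    qed
    then have lim: "filterlim (\<lambda>n. g (X n) + f (X n) + h (Y n)) at_top sequentially"
      using coercive[OF fe] by blast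
    have "\<forall>\<^sub>F n in sequentially. \<Phi> 0 + 1 \<le> g (X n) + f (X n) + h (Y n)"
      using lim by (simp add: filterlim_at_top)
    then obtain N where N: "\<And>n. n \<ge> N \<Longrightarrow> \<Phi> 0 + 1 \<le> g (X n) + f (X n) + h (Y n)"
      unfolding eventually_sequentially by blast
    have "\<Phi> 0 + 1 \<le> g (X N) + f (X N) + h (Y N)" using N by simp
    moreover have "g (X N) + f (X N) + h (Y N) \<le> \<Phi> (\<sigma> N)" unfolding X_def Y_def by (rule lowb)
    moreover have "\<Phi> (\<sigma> N) \<le> \<Phi> 0" using dec by (simp add: decseq_def)
    ultimately show False by linarith
  qed
  then obtain R where R: "\<And>k. norm (W (Suc k)) \<le> R" by blast
  obtain Db where Db: "\<And>k. norm (D k) \<le> Db" using BseqE[OF convergent_imp_Bseq[OF convergentI[OF D0]]] by metis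
  obtain Yb where Yb: "\<And>k. norm (ye k) \<le> Yb" using BseqE[OF convergent_imp_Bseq[OF convergentI[OF ye0]]] by metis
  define Mb where "Mb = norm (gradh 0) + Lh * (Db + R) + Ly * Yb"
  have ghb: "norm (gradh (y (Suc k)) + Ly *\<^sub>R ye (Suc k)) \<le> Mb" for k
  proof -
    have ysk: "y (Suc k) = D (Suc k) - W (Suc k)" unfolding D_def by simp
    have yb: "norm (y (Suc k)) \<le> Db + R"
      using Db[of "Suc k"] R[of k] norm_triangle_ineq4[of "D (Suc k)" "W (Suc k)"] unfolding ysk by linarith
    have "norm (gradh (y (Suc k))) - norm (gradh 0) \<le> norm (gradh (y (Suc k)) - gradh 0)"
      by (rule norm_triangle_ineq2)
    also have "\<dots> \<le> Lh * norm (y (Suc k))" using hlip[of "y (Suc k)" 0] by simp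
    also have "\<dots> \<le> Lh * (Db + R)" using yb Lh0 by (rule mult_left_mono)
    finally have g1: "norm (gradh (y (Suc k))) \<le> norm (gradh 0) + Lh * (Db + R)" by linarith
    have g2: "norm (Ly *\<^sub>R ye (Suc k)) \<le> Ly * Yb"
      using Ly0 Yb[of "Suc k"] by (simp add: mult_left_mono)
    show ?thesis using norm_triangle_ineq[of "gradh (y (Suc k))" "Ly *\<^sub>R ye (Suc k)"] g1 g2
      unfolding Mb_def by linarith
  qed
  have gr: "\<gamma> (Suc (Suc k)) \<bullet> r (Suc (Suc k)) = - ((gradh (y (Suc k)) + Ly *\<^sub>R ye (Suc k)) \<bullet> D (Suc (Suc k)))" for k
  proof -
    have "\<gamma> (Suc (Suc k)) \<bullet> r (Suc (Suc k)) = \<gamma> (Suc (Suc k)) \<bullet> (B *v D (Suc (Suc k)))" by (simp add: BD)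
    also have "\<dots> = D (Suc (Suc k)) \<bullet> (transpose B *v \<gamma> (Suc (Suc k)))"
      using mv_dot_transpose[of B "D (Suc (Suc k))" "\<gamma> (Suc (Suc k))"] by (simp add: inner_commute)
    also have "\<dots> = - ((gradh (y (Suc k)) + Ly *\<^sub>R ye (Suc k)) \<bullet> D (Suc (Suc k)))"
      unfolding opt ye_def by (simp add: inner_commute inner_diff_right inner_add_right)
    finally show ?thesis .
  qed
  have gr0: "(\<lambda>k. \<gamma> (Suc (Suc k)) \<bullet> r (Suc (Suc k))) \<longlonglongrightarrow> 0"
  proof (rule Lim_null_comparison)
    show "\<forall>\<^sub>F k in sequentially. norm (\<gamma> (Suc (Suc k)) \<bullet> r (Suc (Suc k))) \<le> Mb * norm (D (Suc (Suc k)))"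
    proof (intro always_eventually allI)
      fix k
      have "norm (\<gamma> (Suc (Suc k)) \<bullet> r (Suc (Suc k))) = \<bar>(gradh (y (Suc k)) + Ly *\<^sub>R ye (Suc k)) \<bullet> D (Suc (Suc k))\<bar>"
        unfolding gr by simp
      also have "\<dots> \<le> norm (gradh (y (Suc k)) + Ly *\<^sub>R ye (Suc k)) * norm (D (Suc (Suc k)))"
        by (rule Cauchy_Schwarz_ineq2)
      also have "\<dots> \<le> Mb * norm (D (Suc (Suc k)))" using ghb[of k] by (intro mult_right_mono) auto
      finally show "norm (\<gamma> (Suc (Suc k)) \<bullet> r (Suc (Suc k))) \<le> Mb * norm (D (Suc (Suc k)))" .
    qed
    show "(\<lambda>k. Mb * norm (D (Suc (Suc k)))) \<longlonglongrightarrow> 0"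
      using tendsto_mult_right_zero[OF tendsto_norm_zero[OF LIMSEQ_Suc[OF LIMSEQ_Suc[OF D0]]], of Mb] by simp
  qed
  have Fe: "F (Suc (Suc k)) = \<Phi> (Suc k) - C * (norm (ye (Suc k)))\<^sup>2 - \<gamma> (Suc (Suc k)) \<bullet> r (Suc (Suc k))
      - \<beta>/2 * (norm (r (Suc (Suc k))))\<^sup>2" for k
    unfolding \<Phi>_def Lag_def by simp
  have a1: "(\<lambda>k. C * (norm (ye (Suc k)))\<^sup>2) \<longlonglongrightarrow> 0"
    using tendsto_mult[OF tendsto_const[of C] tendsto_power[OF ya0', of 2]] by simp
  have a2: "(\<lambda>k. \<beta>/2 * (norm (r (Suc (Suc k))))\<^sup>2) \<longlonglongrightarrow> 0"
    using tendsto_mult[OF tendsto_const[of "\<beta>/2"] tendsto_power[OF tendsto_norm_zero[OF rr0], of 2]] by simp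
  have "(\<lambda>k. F (Suc (Suc k))) \<longlonglongrightarrow> L - 0 - 0 - 0"
    unfolding Fe by (rule tendsto_diff[OF tendsto_diff[OF tendsto_diff[OF LIMSEQ_Suc[OF \<Phi>L] a1] gr0] a2])
  then have "F \<longlonglongrightarrow> L" by (simp add: LIMSEQ_imp_Suc)
  then show ?thesis unfolding F_def convergent_def by blast
qed

end
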